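(* Let $0.8<t<1$, $P=(0,t)$, $Q=(0,-t)$, $R=\left(\frac{t-1}{t+1},0\right)$, and let $A_1=(1,0)$, $A_2=\left(\frac{t^2-1}{t^2+1},\frac{2t}{t^2+1}\right)$, $A_3=(0,-1)$, $A_4=(0,1)$, $A_5=\left(\frac{t^2-1}{t^2+1},-\frac{2t}{t^2+1}\right)$. If $v\in S^1$ satisfies $\psi_{\triangle PQR}^5(v)=v$, then $v=A_i$ for some $i$ with $1\leq i\leq 5$.
   Context: $D$ is the open unit disk in $\mathbb R^2$ and $S^1$ its boundary circle. For a closed convex $U\subset D$ and $v\in S^1$, $\psi_U(v)$ is the point $w\in S^1\setminus\{v\}$ such that the line $vw$ meets $U$ and $U$ lies in the closed half-plane to the left of the directed line from $v$ to $w$ (the first point counterclockwise from $v$ whose chord from $v$ is tangent to $U$); $\triangle PQR$ denotes the closed filled triangle. *)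

theory Defs
  imports "HOL-Analysis.Analysis"
begin

text \<open>The plane R^2 is identified with the complex numbers: (x,y) corresponds to Complex x y.
  The orientation quantity Im (cnj (w - v) * (p - v)) is the cross product (w - v) x (p - v);
  it is >= 0 iff p lies in the closed half-plane to the left of the directed line from v to w,
  and = 0 iff p lies on the line through v and w.\<close>

definition cross2 :: "complex \<Rightarrow> complex \<Rightarrow> complex \<Rightarrow> real" where
  "cross2 v w p = Im (cnj (w - v) * (p - v))"

definition psi :: "complex set \<Rightarrow> complex \<Rightarrow> complex" where
  "psi U v = (THE w. cmod w = 1 \<and> w \<noteq> v \<and> (\<exists>p\<in>U. cross2 v w p = 0)
                 \<and> (\<forall>p\<in>U. cross2 v w p \<ge> 0))"

definition triangle :: "complex \<Rightarrow> complex \<Rightarrow> complex \<Rightarrow> complex set" where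
  "triangle P Q R = convex hull {P, Q, R}"

end

theory Submission
  imports Defs
begin

lemma id2d: "((d1::real)^2+d2^2)*(e1*a2-e2*a1) = (d1*a1+d2*a2)*(e1*d2-e2*d1) + (d1*a2-d2*a1)*(e1*d1+e2*d2)"
  by algebra

lemma key_real:
 fixes vx vy dx dy ex ey ax ay bx bz :: real
 assumes hd: "2*(vx*dx+vy*dy) = -(dx^2+dy^2)" and dpos: "dx^2+dy^2>0"
  and he: "2*(vx*ex+vy*ey) = -(ex^2+ey^2)" and epos: "ex^2+ey^2>0"
  and ha: "2*(vx*ax+vy*ay) + ax^2+ay^2 < 0" and hb: "2*(vx*bx+vy*bz) + bx^2+bz^2 < 0"
  and c1: "dx*ay - dy*ax = 0" and c2: "ex*bz - ey*bx = 0"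
  and c3: "dx*bz - dy*bx \<ge> 0" and c4: "ex*ay - ey*ax \<ge> 0"
 shows "dx = ex \<and> dy = ey"
proof -
  have va: "vx*ax+vy*ay < 0" using ha by (smt (verit) sum_power2_ge_zero)
  have vb: "vx*bx+vy*bz < 0" using hb by (smt (verit) sum_power2_ge_zero)
  have vd: "vx*dx+vy*dy < 0" using hd dpos by (smt (verit))
  have ve: "vx*ex+vy*ey < 0" using he epos by (smt (verit))
  have i1: "(dx^2+dy^2)*(vx*ax+vy*ay) = (ax*dx+ay*dy)*(vx*dx+vy*dy)"
  proof -
    have "(dx^2+dy^2)*(vx*ax+vy*ay) = (ax*dx+ay*dy)*(vx*dx+vy*dy) + (dx*ay-dy*ax)*(vy*dx-vx*dy)" by algebra
    then show ?thesis using c1 by simp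
  qed
  have ad: "ax*dx+ay*dy > 0"
  proof -
    have "(ax*dx+ay*dy)*(vx*dx+vy*dy) < 0" using i1 va dpos by (metis mult_pos_neg)
    then show ?thesis using vd by (simp add: mult_less_0_iff)
  qed
  have i2: "(ex^2+ey^2)*(vx*bx+vy*bz) = (bx*ex+bz*ey)*(vx*ex+vy*ey)"
  proof -
    have "(ex^2+ey^2)*(vx*bx+vy*bz) = (bx*ex+bz*ey)*(vx*ex+vy*ey) + (ex*bz-ey*bx)*(vy*ex-vx*ey)" by algebra
    then show ?thesis using c2 by simp
  qed
  have be: "bx*ex+bz*ey > 0"
  proof -
    have "(bx*ex+bz*ey)*(vx*ex+vy*ey) < 0" using i2 vb epos by (metis mult_pos_neg)
    then show ?thesis using ve by (simp add: mult_less_0_iff)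
  qed
  have j1: "(dx^2+dy^2)*(ex*ay-ey*ax) = (dx*ax+dy*ay)*(ex*dy-ey*dx)"
    using id2d[of dx dy ex ay ey ax] c1 by simp
  have j2: "(ex^2+ey^2)*(dx*bz-dy*bx) = (ex*bx+ey*bz)*(dx*ey-dy*ex)"
    using id2d[of ex ey dx bz dy bx] c2 by simp
  have k1: "ex*dy-ey*dx \<ge> 0"
  proof -
    have "(dx*ax+dy*ay)*(ex*dy-ey*dx) \<ge> 0" unfolding j1[symmetric] using c4 dpos by simp
    then show ?thesis using ad by (simp add: zero_le_mult_iff mult.commute)
  qed
  have k2: "dx*ey-dy*ex \<ge> 0"
  proof -
    have "(ex*bx+ey*bz)*(dx*ey-dy*ex) \<ge> 0" unfolding j2[symmetric] using c3 epos by simp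
    then show ?thesis using be by (simp add: zero_le_mult_iff mult.commute)
  qed
  have par: "dx*ey - dy*ex = 0" using k1 k2 by (simp add: mult.commute)
  define mu where "mu = (dx*ex+dy*ey)/(dx^2+dy^2)"
  have e1eq: "ex = mu*dx" and e2eq: "ey = mu*dy"
  proof -
    have "(dx^2+dy^2)*ex = (dx*ex+dy*ey)*dx - (dx*ey-dy*ex)*dy" by algebra
    then have h: "(dx^2+dy^2)*ex = (dx*ex+dy*ey)*dx" using par by simp
    have "mu*dx = ((dx^2+dy^2)*ex)/(dx^2+dy^2)" unfolding h mu_def by simp
    then show "ex = mu*dx" using dpos by (metis less_irrefl nonzero_mult_div_cancel_left)
    have "(dx^2+dy^2)*ey = (dx*ex+dy*ey)*dy + (dx*ey-dy*ex)*dx" by algebra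
    then have h: "(dx^2+dy^2)*ey = (dx*ex+dy*ey)*dy" using par by simp
    have "mu*dy = ((dx^2+dy^2)*ey)/(dx^2+dy^2)" unfolding h mu_def by simp
    then show "ey = mu*dy" using dpos by (metis less_irrefl nonzero_mult_div_cancel_left)
  qed
  have "mu*(mu-1)*(dx^2+dy^2) = 0"
  proof -
    have A: "2*mu*(vx*dx+vy*dy) = -(mu^2*(dx^2+dy^2))" using he unfolding e1eq e2eq by (simp add: algebra_simps power2_eq_square)
    show ?thesis using A hd by algebra
  qed
  then have "mu = 0 \<or> mu = 1" using dpos by auto
  moreover have "mu \<noteq> 0" using epos e1eq e2eq by auto
  ultimately show ?thesis using e1eq e2eq by auto
qed
lemma cross2_alt: "cross2 v w p = (Re w - Re v)*(Im p - Im v) - (Im w - Im v)*(Re p - Re v)"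
  by (simp add: cross2_def algebra_simps)

lemma norm1_iff: "cmod z = 1 \<longleftrightarrow> (Re z)^2 + (Im z)^2 = 1"
  by (simp add: cmod_def)
lemma normlt1_iff: "cmod z < 1 \<longleftrightarrow> (Re z)^2 + (Im z)^2 < 1"
  by (simp add: cmod_def)

lemma chord_unique:
  assumes v: "cmod v = 1" and w: "cmod w = 1" "w \<noteq> v" and w': "cmod w' = 1" "w' \<noteq> v"
    and p: "cmod p < 1" "cross2 v w p = 0" "cross2 v w' p \<ge> 0"
    and p': "cmod p' < 1" "cross2 v w' p' = 0" "cross2 v w p' \<ge> 0"
  shows "w = w'"
proof -
  have dpos: "(Re w - Re v)^2 + (Im w - Im v)^2 > 0"
    using w(2) complex_eqI by (metis add_le_same_cancel2 eq_iff_diff_eq_0 not_le sum_power2_le_zero_iff)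
  have epos: "(Re w' - Re v)^2 + (Im w' - Im v)^2 > 0"
    using w'(2) complex_eqI by (metis add_le_same_cancel2 eq_iff_diff_eq_0 not_le sum_power2_le_zero_iff)
  have V: "(Re v)^2 + (Im v)^2 = 1" using v norm1_iff by blast
  have W: "(Re w)^2 + (Im w)^2 = 1" using w norm1_iff by blast
  have W': "(Re w')^2 + (Im w')^2 = 1" using w' norm1_iff by blast
  have P: "(Re p)^2 + (Im p)^2 < 1" using p normlt1_iff by blast
  have P': "(Re p')^2 + (Im p')^2 < 1" using p' normlt1_iff by blast
  have "Re w - Re v = Re w' - Re v \<and> Im w - Im v = Im w' - Im v"
  proof (rule key_real[where vx="Re v" and vy="Im v" and dx="Re w - Re v" and dy="Im w - Im v" and ex="Re w' - Re v" and ey="Im w' - Im v" and ax="Re p - Re v" and ay="Im p - Im v" and bx="Re p' - Re v" and bz="Im p' - Im v"])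
    show "2 * (Re v * (Re w - Re v) + Im v * (Im w - Im v)) = - ((Re w - Re v)\<^sup>2 + (Im w - Im v)\<^sup>2)"
      using V W by (simp add: algebra_simps power2_eq_square)
    show "2 * (Re v * (Re w' - Re v) + Im v * (Im w' - Im v)) = - ((Re w' - Re v)\<^sup>2 + (Im w' - Im v)\<^sup>2)"
      using V W' by (simp add: algebra_simps power2_eq_square)
    show "2 * (Re v * (Re p - Re v) + Im v * (Im p - Im v)) + (Re p - Re v)\<^sup>2 + (Im p - Im v)\<^sup>2 < 0"
      using V P by (simp add: algebra_simps power2_eq_square)
    show "2 * (Re v * (Re p' - Re v) + Im v * (Im p' - Im v)) + (Re p' - Re v)\<^sup>2 + (Im p' - Im v)\<^sup>2 < 0"
      using V P' by (simp add: algebra_simps power2_eq_square)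
  qed (use dpos epos p p' in \<open>simp_all add: cross2_alt\<close>)
  then show ?thesis by (simp add: complex_eqI)
qed

lemma psi_eqI:
  assumes U: "\<And>q. q \<in> U \<Longrightarrow> cmod q < 1" and v: "cmod v = 1"
    and w: "cmod w = 1" "w \<noteq> v" and p: "p \<in> U" "cross2 v w p = 0"
    and all: "\<And>q. q \<in> U \<Longrightarrow> cross2 v w q \<ge> 0"
  shows "psi U v = w"
  unfolding psi_def
proof (rule the1_equality)
  show "\<exists>!w. cmod w = 1 \<and> w \<noteq> v \<and> (\<exists>p\<in>U. cross2 v w p = 0) \<and> (\<forall>p\<in>U. 0 \<le> cross2 v w p)"
  proof (rule ex1I[of _ w])
    show "cmod w = 1 \<and> w \<noteq> v \<and> (\<exists>p\<in>U. cross2 v w p = 0) \<and> (\<forall>p\<in>U. 0 \<le> cross2 v w p)"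
      using w p all by blast
  next
    fix w' assume h: "cmod w' = 1 \<and> w' \<noteq> v \<and> (\<exists>p\<in>U. cross2 v w' p = 0) \<and> (\<forall>p\<in>U. 0 \<le> cross2 v w' p)"
    then obtain p' where p': "p' \<in> U" "cross2 v w' p' = 0" by blast
    show "w' = w"
      using chord_unique[OF v h[THEN conjunct1] _ w, of p' p] h p' p U all by auto
  qed
  show "cmod w = 1 \<and> w \<noteq> v \<and> (\<exists>p\<in>U. cross2 v w p = 0) \<and> (\<forall>p\<in>U. 0 \<le> cross2 v w p)"
    using w p all by blast
qed


definition Vp :: "real \<Rightarrow> complex" where
  "Vp u = Complex (-2*u/(1+u^2)) ((1-u^2)/(1+u^2))"

definition dot2 :: "complex \<Rightarrow> complex \<Rightarrow> real" where
  "dot2 a b = Re a * Re b + Im a * Im b"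

lemma pos1: "1 + (u::real)^2 > 0" by (simp add: add_pos_nonneg)
lemma nz1[simp]: "1 + (u::real)^2 \<noteq> 0" using pos1[of u] by linarith

definition Vh :: "real \<Rightarrow> real \<Rightarrow> complex" where
  "Vh a b = Complex (-2*a*b/(a^2+b^2)) ((b^2-a^2)/(a^2+b^2))"

lemma Vp_Vh: "Vp u = Vh u 1" unfolding Vp_def Vh_def by (simp add: add.commute)

lemma sq_sum_nz: "(a::real) \<noteq> 0 \<or> b \<noteq> 0 \<Longrightarrow> a^2+b^2 \<noteq> 0"
  by (simp add: add_nonneg_eq_0_iff)

lemma Vh_scale: assumes "c \<noteq> 0" "a \<noteq> 0 \<or> b \<noteq> 0" shows "Vh (c*a) (c*b) = Vh a b"
proof -
  have n1: "a^2+b^2 \<noteq> 0" using assms(2) by (rule sq_sum_nz)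
  have n2: "(c*a)^2+(c*b)^2 \<noteq> 0" using assms by (intro sq_sum_nz) auto
  have "-2*(c*a)*(c*b)/((c*a)^2+(c*b)^2) = -2*a*b/(a^2+b^2)"
    using n1 n2 by (simp add: frac_eq_eq) (simp add: algebra_simps power2_eq_square)
  moreover have "((c*b)^2-(c*a)^2)/((c*a)^2+(c*b)^2) = (b^2-a^2)/(a^2+b^2)"
    using n1 n2 by (simp add: frac_eq_eq) (simp add: algebra_simps power2_eq_square)
  ultimately show ?thesis unfolding Vh_def by simp
qed

lemma cross_gen: assumes "D1 \<noteq> 0" "D2 \<noteq> 0"
  shows "cross2 (Complex (x1/D1) (y1/D1)) (Complex (x2/D2) (y2/D2)) X =
    ((x2*D1 - x1*D2)*(Im X*D1 - y1) - (y2*D1 - y1*D2)*(Re X*D1 - x1))/(D1^2*D2)"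
  using assms unfolding cross2_alt by (simp add: field_simps) (simp add: algebra_simps power2_eq_square)

lemma cross_Vh: assumes "a \<noteq> 0 \<or> b \<noteq> 0"
  shows "cross2 (Vh u 1) (Vh a b) X = 
   (((-2*a*b)*(u^2+1) - (-2*u*1)*(a^2+b^2))*(Im X*(u^2+1) - (1-u^2))
    - ((b^2-a^2)*(u^2+1) - (1-u^2)*(a^2+b^2))*(Re X*(u^2+1) - (-2*u*1)))/((u^2+1)^2*(a^2+b^2))"
proof -
  have n1: "u^2+1 \<noteq> 0" by (simp add: add.commute)
  have n2: "a^2+b^2 \<noteq> 0" using assms by (rule sq_sum_nz)
  show ?thesis unfolding Vh_def using cross_gen[OF n1 n2, of "-2*u*1" "1^2-u^2" "-2*a*b" "b^2-a^2" X] by simp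
qed


lemma chord_dot:
  fixes vx vy dx dy ax ay :: real
  assumes hd: "2*(vx*dx+vy*dy) = -(dx^2+dy^2)" and dpos: "dx^2+dy^2>0"
  and ha: "2*(vx*ax+vy*ay) + ax^2+ay^2 < 0" and c1: "dx*ay - dy*ax = 0"
  shows "ax*dx+ay*dy > 0"
proof -
  have va: "vx*ax+vy*ay < 0" using ha by (smt (verit) sum_power2_ge_zero)
  have vd: "vx*dx+vy*dy < 0" using hd dpos by (smt (verit))
  have i1: "(dx^2+dy^2)*(vx*ax+vy*ay) = (ax*dx+ay*dy)*(vx*dx+vy*dy)"
  proof -
    have "(dx^2+dy^2)*(vx*ax+vy*ay) = (ax*dx+ay*dy)*(vx*dx+vy*dy) + (dx*ay-dy*ax)*(vy*dx-vx*dy)" by algebra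
    then show ?thesis using c1 by simp
  qed
  have "(ax*dx+ay*dy)*(vx*dx+vy*dy) < 0" using i1 va dpos by (metis mult_pos_neg)
  then show ?thesis using vd by (simp add: mult_less_0_iff)
qed

lemma chord_via:
  assumes v: "cmod v = 1" and w: "cmod w = 1" "w \<noteq> v" and X: "cmod X < 1"
    and c: "cross2 v w X = 0" and y: "cross2 v X Y \<ge> 0"
  shows "cross2 v w Y \<ge> 0"
proof -
  have dpos: "(Re w - Re v)^2 + (Im w - Im v)^2 > 0"
    using w(2) complex_eqI by (metis add_le_same_cancel2 eq_iff_diff_eq_0 not_le sum_power2_le_zero_iff)
  have V: "(Re v)^2 + (Im v)^2 = 1" using v norm1_iff by blast
  have W: "(Re w)^2 + (Im w)^2 = 1" using w norm1_iff by blast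
  have XX: "(Re X)^2 + (Im X)^2 < 1" using X normlt1_iff by blast
  have apos: "(Re X - Re v)^2 + (Im X - Im v)^2 > 0"
  proof -
    have "X \<noteq> v" using X v by auto
    then show ?thesis using complex_eqI by (metis add_le_same_cancel2 eq_iff_diff_eq_0 not_le sum_power2_le_zero_iff)
  qed
  have ad: "(Re X - Re v)*(Re w - Re v) + (Im X - Im v)*(Im w - Im v) > 0"
  proof (rule chord_dot[where vx="Re v" and vy="Im v"])
    show "2 * (Re v * (Re w - Re v) + Im v * (Im w - Im v)) = - ((Re w - Re v)\<^sup>2 + (Im w - Im v)\<^sup>2)"
      using V W by (simp add: algebra_simps power2_eq_square)
    show "2 * (Re v * (Re X - Re v) + Im v * (Im X - Im v)) + (Re X - Re v)\<^sup>2 + (Im X - Im v)\<^sup>2 < 0"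
      using V XX by (simp add: algebra_simps power2_eq_square)
  qed (use dpos c in \<open>simp_all add: cross2_alt\<close>)
  define ax where "ax = Re X - Re v"
  define ay where "ay = Im X - Im v"
  define dx where "dx = Re w - Re v"
  define dy where "dy = Im w - Im v"
  define bx where "bx = Re Y - Re v"
  define bz where "bz = Im Y - Im v"
  have c': "dx*ay - dy*ax = 0" using c unfolding cross2_alt ax_def ay_def dx_def dy_def by simp
  have id: "(ax^2+ay^2)*(dx*bz-dy*bx) = (ax*dx+ay*dy)*(ax*bz-ay*bx) - (ax*dy-ay*dx)*(ax*bx+ay*bz)" by algebra
  have "(ax^2+ay^2)*(dx*bz-dy*bx) \<ge> 0"
  proof -
    have "(ax^2+ay^2)*(dx*bz-dy*bx) = (ax*dx+ay*dy)*(ax*bz-ay*bx)" using id c' by algebra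
    moreover have "ax*bz-ay*bx \<ge> 0" using y unfolding cross2_alt ax_def ay_def bx_def bz_def by simp
    moreover have "ax*dx+ay*dy > 0" using ad unfolding ax_def ay_def dx_def dy_def .
    ultimately show ?thesis by simp
  qed
  then have "dx*bz-dy*bx \<ge> 0" using apos unfolding ax_def ay_def by (simp add: zero_le_mult_iff)
  then show ?thesis unfolding cross2_alt dx_def dy_def bx_def bz_def by simp
qed

lemma cross_hull:
  assumes "p \<in> convex hull {A,B,C}" "cross2 v w A \<ge> 0" "cross2 v w B \<ge> 0" "cross2 v w C \<ge> 0"
  shows "cross2 v w p \<ge> 0"
proof -
  obtain a b c where abc: "0 \<le> a" "0 \<le> b" "0 \<le> c" "a+b+c = 1" "p = a *\<^sub>R A + b *\<^sub>R B + c *\<^sub>R C"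
    using assms(1) unfolding convex_hull_3 by blast
  have "cross2 v w p = a * cross2 v w A + b * cross2 v w B + c * cross2 v w C"
    unfolding cross2_alt abc(5) using abc(4) apply simp apply algebra done
  then show ?thesis using assms abc by simp
qed

lemma psi_tri_step:
  assumes A: "cmod A < 1" and B: "cmod B < 1" and C: "cmod C < 1" and v: "cmod v = 1"
    and w: "cmod w = 1" "w \<noteq> v" and X: "X \<in> {A,B,C}" and c: "cross2 v w X = 0"
    and cA: "cross2 v X A \<ge> 0" and cB: "cross2 v X B \<ge> 0" and cC: "cross2 v X C \<ge> 0"
  shows "psi (triangle A B C) v = w"
  unfolding triangle_def
proof (rule psi_eqI[OF _ v w _ c])
  have sub: "convex hull {A,B,C} \<subseteq> ball 0 1"
    by (rule hull_minimal) (use A B C in \<open>auto simp: convex_ball\<close>)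
  show "cmod q < 1" if "q \<in> convex hull {A,B,C}" for q using sub that by auto
  show "X \<in> convex hull {A,B,C}" using X by (meson hull_inc)
  have XX: "cmod X < 1" using X A B C by auto
  show "cross2 v w q \<ge> 0" if "q \<in> convex hull {A,B,C}" for q
    using cross_hull[OF that] chord_via[OF v w XX c] cA cB cC by blast
qed


lemma Vp_norm: "cmod (Vp u) = 1"
proof -
  have n: "1+u^2 \<noteq> 0" by simp
  have "(-2*u/(1+u^2))^2 + ((1-u^2)/(1+u^2))^2 = 1"
    using n by (simp add: power_divide add_divide_distrib[symmetric] divide_eq_1_iff) (simp add: algebra_simps power2_eq_square)
  then show ?thesis unfolding norm1_iff Vp_def by simp
qed

lemma Vp_inv: "- Re (Vp u) / (1 + Im (Vp u)) = u"
proof -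
  have n: "1+u^2 \<noteq> 0" by simp
  have "1 + (1-u^2)/(1+u^2) = 2/(1+u^2)" using n by (simp add: field_simps)
  then show ?thesis unfolding Vp_def using n by simp
qed

lemma Vp_inj: "Vp a = Vp b \<Longrightarrow> a = b"
  by (metis Vp_inv)

lemma VpP: assumes "u \<noteq> 0" shows "Vp (-k/u) = Vh (-k) u"
proof -
  have "Vh (-k) u = Vh (u*(-k/u)) (u*1)" using assms by simp
  also have "\<dots> = Vh (-k/u) 1" using assms by (intro Vh_scale) auto
  finally show ?thesis by (simp add: Vp_Vh)
qed

lemma VpQ: assumes "u \<noteq> 0" "k \<noteq> 0" shows "Vp (-1/(k*u)) = Vh (-1) (k*u)"
proof -
  have "Vh (-1) (k*u) = Vh ((k*u)*(-1/(k*u))) ((k*u)*1)" using assms by simp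
  also have "\<dots> = Vh (-1/(k*u)) 1" using assms by (intro Vh_scale) auto
  finally show ?thesis by (simp add: Vp_Vh)
qed

lemma VpR: assumes "u \<noteq> k" shows "Vp ((k*u-1)/(u-k)) = Vh (k*u-1) (u-k)"
proof -
  have "Vh (k*u-1) (u-k) = Vh ((u-k)*((k*u-1)/(u-k))) ((u-k)*1)" using assms by simp
  also have "\<dots> = Vh ((k*u-1)/(u-k)) 1" using assms by (intro Vh_scale) auto
  finally show ?thesis by (simp add: Vp_Vh)
qed

lemma cross_gen1: assumes "D \<noteq> 0"
  shows "cross2 (Complex (x1/D) (y1/D)) X Y = ((Re X*D - x1)*(Im Y*D - y1) - (Im X*D - y1)*(Re Y*D - x1))/D^2"
  using assms unfolding cross2_alt by (simp add: field_simps) (simp add: algebra_simps power2_eq_square)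

lemma cross_v: "cross2 (Vp u) X Y = ((Re X*(1+u^2) + 2*u)*(Im Y*(1+u^2) - (1-u^2))
   - (Im X*(1+u^2) - (1-u^2))*(Re Y*(1+u^2) + 2*u))/(1+u^2)^2"
  unfolding Vp_def using cross_gen1[OF nz1[of u], of "-2*u" "1-u^2" X Y] by simp


lemma sign_from: "(x::real) * c = y \<Longrightarrow> c > 0 \<Longrightarrow> y \<ge> 0 \<Longrightarrow> x \<ge> 0"
  by (metis zero_le_mult_iff not_less order_less_le)

lemma cross_self: "cross2 v X X = 0" unfolding cross2_alt by simp

locale tri =
  fixes k tt :: real
  assumes k0: "0 < k" and k1: "k < 1" and ttk: "tt*(1+k) = 1-k"
begin

definition "PP = Complex 0 tt"
definition "QQ = Complex 0 (-tt)"
definition "RR = Complex (-k) 0"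
definition "TT = triangle PP QQ RR"

lemma tt_eq: "tt = (1-k)/(1+k)" using ttk k0 by (simp add: eq_divide_eq)
lemma tt0: "0 < tt" unfolding tt_eq using k0 k1 by simp
lemma tt1: "tt < 1" unfolding tt_eq using k0 k1 by simp

lemma normP: "cmod PP < 1" unfolding PP_def using tt0 tt1 by (simp add: cmod_def)
lemma normQ: "cmod QQ < 1" unfolding QQ_def using tt0 tt1 by (simp add: cmod_def)
lemma normR: "cmod RR < 1" unfolding RR_def using k0 k1 by (simp add: cmod_def)

lemma crossPQ: "cross2 (Vp u) PP QQ * (1+u^2)^2 = -4*tt*u*(1+u^2)"
proof -
  have "cross2 (Vp u) PP QQ * (1+u^2)^2 = ((Re PP*(1+u^2) + 2*u)*(Im QQ*(1+u^2) - (1-u^2))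
   - (Im PP*(1+u^2) - (1-u^2))*(Re QQ*(1+u^2) + 2*u))" unfolding cross_v by simp
  also have "\<dots> = -4*tt*u*(1+u^2)" unfolding PP_def QQ_def by simp algebra
  finally show ?thesis .
qed
lemma crossQP: "cross2 (Vp u) QQ PP * (1+u^2)^2 = 4*tt*u*(1+u^2)"
proof -
  have "cross2 (Vp u) QQ PP * (1+u^2)^2 = ((Re QQ*(1+u^2) + 2*u)*(Im PP*(1+u^2) - (1-u^2))
   - (Im QQ*(1+u^2) - (1-u^2))*(Re PP*(1+u^2) + 2*u))" unfolding cross_v by simp
  also have "\<dots> = 4*tt*u*(1+u^2)" unfolding PP_def QQ_def by simp algebra
  finally show ?thesis .
qed

lemma crossPR: "cross2 (Vp u) PP RR * ((1+u^2)^2*(1+k)) = 2*(k*u^2-(1-k)*u-k^2)*(1+u^2)"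
proof -
  have "cross2 (Vp u) PP RR * ((1+u^2)^2*(1+k)) = ((Re PP*(1+u^2) + 2*u)*(Im RR*(1+u^2) - (1-u^2))
   - (Im PP*(1+u^2) - (1-u^2))*(Re RR*(1+u^2) + 2*u)) * (1+k)" unfolding cross_v by simp
  also have "\<dots> = 2*(k*u^2-(1-k)*u-k^2)*(1+u^2)" unfolding PP_def RR_def using ttk by simp algebra
  finally show ?thesis .
qed
lemma crossRP: "cross2 (Vp u) RR PP * ((1+u^2)^2*(1+k)) = -2*(k*u^2-(1-k)*u-k^2)*(1+u^2)"
proof -
  have "cross2 (Vp u) RR PP * ((1+u^2)^2*(1+k)) = ((Re RR*(1+u^2) + 2*u)*(Im PP*(1+u^2) - (1-u^2))
   - (Im RR*(1+u^2) - (1-u^2))*(Re PP*(1+u^2) + 2*u)) * (1+k)" unfolding cross_v by simp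
  also have "\<dots> = -2*(k*u^2-(1-k)*u-k^2)*(1+u^2)" unfolding PP_def RR_def using ttk by simp algebra
  finally show ?thesis .
qed
lemma crossQR: "cross2 (Vp u) QQ RR * ((1+u^2)^2*(1+k)) = 2*(k^2*u^2+(1-k)*u-k)*(1+u^2)"
proof -
  have "cross2 (Vp u) QQ RR * ((1+u^2)^2*(1+k)) = ((Re QQ*(1+u^2) + 2*u)*(Im RR*(1+u^2) - (1-u^2))
   - (Im QQ*(1+u^2) - (1-u^2))*(Re RR*(1+u^2) + 2*u)) * (1+k)" unfolding cross_v by simp
  also have "\<dots> = 2*(k^2*u^2+(1-k)*u-k)*(1+u^2)" unfolding QQ_def RR_def using ttk by simp algebra
  finally show ?thesis .
qed
lemma crossRQ: "cross2 (Vp u) RR QQ * ((1+u^2)^2*(1+k)) = -2*(k^2*u^2+(1-k)*u-k)*(1+u^2)"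
proof -
  have "cross2 (Vp u) RR QQ * ((1+u^2)^2*(1+k)) = ((Re RR*(1+u^2) + 2*u)*(Im QQ*(1+u^2) - (1-u^2))
   - (Im RR*(1+u^2) - (1-u^2))*(Re QQ*(1+u^2) + 2*u)) * (1+k)" unfolding cross_v by simp
  also have "\<dots> = -2*(k^2*u^2+(1-k)*u-k)*(1+u^2)" unfolding QQ_def RR_def using ttk by simp algebra
  finally show ?thesis .
qed


lemma zero_from: "(x::real) * c = 0 \<Longrightarrow> c \<noteq> 0 \<Longrightarrow> x = 0" by simp

lemma crossZP: assumes "u \<noteq> 0" shows "cross2 (Vp u) (Vp (-k/u)) PP = 0"
proof -
  have ab: "-k \<noteq> 0 \<or> u \<noteq> 0" using k0 by simp
  have "cross2 (Vp u) (Vp (-k/u)) PP = 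
   (((-2*(-k)*u)*(u^2+1) - (-2*u*1)*((-k)^2+u^2))*(Im PP*(u^2+1) - (1-u^2))
    - ((u^2-(-k)^2)*(u^2+1) - (1-u^2)*((-k)^2+u^2))*(Re PP*(u^2+1) - (-2*u*1)))/((u^2+1)^2*((-k)^2+u^2))"
    unfolding VpP[OF assms] Vp_Vh[of u] by (rule cross_Vh[OF ab])
  also have "\<dots> = 0"
  proof -
    have "(((-2*(-k)*u)*(u^2+1) - (-2*u*1)*((-k)^2+u^2))*(Im PP*(u^2+1) - (1-u^2))
    - ((u^2-(-k)^2)*(u^2+1) - (1-u^2)*((-k)^2+u^2))*(Re PP*(u^2+1) - (-2*u*1))) * (1+k) = 0"
      unfolding PP_def using ttk by simp algebra
    then show ?thesis using k0 by simp
  qed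
  finally show ?thesis .
qed

lemma crossZQ: assumes "u \<noteq> 0" shows "cross2 (Vp u) (Vp (-1/(k*u))) QQ = 0"
proof -
  have ab: "(-1::real) \<noteq> 0 \<or> k*u \<noteq> 0" by simp
  have kn: "k \<noteq> 0" using k0 by simp
  have "cross2 (Vp u) (Vp (-1/(k*u))) QQ = 
   (((-2*(-1)*(k*u))*(u^2+1) - (-2*u*1)*((-1)^2+(k*u)^2))*(Im QQ*(u^2+1) - (1-u^2))
    - (((k*u)^2-(-1)^2)*(u^2+1) - (1-u^2)*((-1)^2+(k*u)^2))*(Re QQ*(u^2+1) - (-2*u*1)))/((u^2+1)^2*((-1)^2+(k*u)^2))"
    unfolding VpQ[OF assms, of k, OF kn] Vp_Vh[of u] by (rule cross_Vh[OF ab]) 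
  also have "\<dots> = 0"
  proof -
    have "(((-2*(-1)*(k*u))*(u^2+1) - (-2*u*1)*((-1)^2+(k*u)^2))*(Im QQ*(u^2+1) - (1-u^2))
    - (((k*u)^2-(-1)^2)*(u^2+1) - (1-u^2)*((-1)^2+(k*u)^2))*(Re QQ*(u^2+1) - (-2*u*1))) * (1+k) = 0"
      unfolding QQ_def using ttk by simp algebra
    then show ?thesis using k0 by simp
  qed
  finally show ?thesis .
qed

lemma crossZR: assumes "u \<noteq> k" shows "cross2 (Vp u) (Vp ((k*u-1)/(u-k))) RR = 0"
proof -
  have ab: "k*u-1 \<noteq> 0 \<or> u-k \<noteq> 0" using assms by simp
  have "cross2 (Vp u) (Vp ((k*u-1)/(u-k))) RR = 
   (((-2*(k*u-1)*(u-k))*(u^2+1) - (-2*u*1)*((k*u-1)^2+(u-k)^2))*(Im RR*(u^2+1) - (1-u^2))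
    - (((u-k)^2-(k*u-1)^2)*(u^2+1) - (1-u^2)*((k*u-1)^2+(u-k)^2))*(Re RR*(u^2+1) - (-2*u*1)))/((u^2+1)^2*((k*u-1)^2+(u-k)^2))"
    unfolding VpR[OF assms] Vp_Vh[of u] by (rule cross_Vh[OF ab])
  also have "\<dots> = 0"
  proof -
    have "(((-2*(k*u-1)*(u-k))*(u^2+1) - (-2*u*1)*((k*u-1)^2+(u-k)^2))*(Im RR*(u^2+1) - (1-u^2))
    - (((u-k)^2-(k*u-1)^2)*(u^2+1) - (1-u^2)*((k*u-1)^2+(u-k)^2))*(Re RR*(u^2+1) - (-2*u*1))) = 0"
      unfolding RR_def by simp algebra
    then show ?thesis by simp
  qed
  finally show ?thesis .
qed


lemma pos_sq1: "(1+u^2)^2 > (0::real)" using pos1[of u] by simp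

lemma stepP: assumes u: "u < 0" and g: "k*u^2-(1-k)*u-k^2 \<ge> 0"
  shows "psi TT (Vp u) = Vp (-k/u)"
  unfolding TT_def
proof (rule psi_tri_step[OF normP normQ normR Vp_norm Vp_norm _ _ crossZP])
  show "u \<noteq> 0" using u by simp
  show "Vp (-k/u) \<noteq> Vp u"
  proof
    assume "Vp (-k/u) = Vp u"
    then have "-k/u = u" by (rule Vp_inj)
    then have "-k = u*u" using u by (simp add: field_simps)
    then show False using k0 by (smt (verit) zero_le_square)
  qed
  show "PP \<in> {PP,QQ,RR}" by simp
  show "cross2 (Vp u) PP PP \<ge> 0" by (simp add: cross_self)
  show "cross2 (Vp u) PP QQ \<ge> 0"
    by (rule sign_from[OF crossPQ pos_sq1]) (use u tt0 pos1[of u] in \<open>simp add: mult_nonneg_nonpos mult_nonpos_nonneg\<close>)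
  show "cross2 (Vp u) PP RR \<ge> 0"
    by (rule sign_from[OF crossPR]) (use pos_sq1[of u] k0 g pos1[of u] in \<open>simp_all\<close>)
qed

lemma stepQ: assumes u: "u > 0" and g: "k^2*u^2+(1-k)*u-k \<ge> 0"
  shows "psi TT (Vp u) = Vp (-1/(k*u))"
  unfolding TT_def
proof (rule psi_tri_step[OF normP normQ normR Vp_norm Vp_norm _ _ crossZQ])
  show "u \<noteq> 0" using u by simp
  show "Vp (-1/(k*u)) \<noteq> Vp u"
  proof
    assume "Vp (-1/(k*u)) = Vp u"
    then have "-1/(k*u) = u" by (rule Vp_inj)
    then have "-1 = k*(u*u)" using u k0 by (simp add: field_simps)
    then show False using k0 by (smt (verit) zero_le_square mult_nonneg_nonneg)
  qed
  show "QQ \<in> {PP,QQ,RR}" by simp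
  show "cross2 (Vp u) QQ QQ \<ge> 0" by (simp add: cross_self)
  show "cross2 (Vp u) QQ PP \<ge> 0"
    by (rule sign_from[OF crossQP pos_sq1]) (use u tt0 pos1[of u] in \<open>simp\<close>)
  show "cross2 (Vp u) QQ RR \<ge> 0"
    by (rule sign_from[OF crossQR]) (use pos_sq1[of u] k0 g pos1[of u] in \<open>simp_all\<close>)
qed

lemma stepR: assumes u: "u \<noteq> k" and g1: "k*u^2-(1-k)*u-k^2 \<le> 0" and g2: "k^2*u^2+(1-k)*u-k \<le> 0"
  shows "psi TT (Vp u) = Vp ((k*u-1)/(u-k))"
  unfolding TT_def
proof (rule psi_tri_step[OF normP normQ normR Vp_norm Vp_norm _ _ crossZR[OF u]])
  show "Vp ((k*u-1)/(u-k)) \<noteq> Vp u"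
  proof
    assume "Vp ((k*u-1)/(u-k)) = Vp u"
    then have "(k*u-1)/(u-k) = u" by (rule Vp_inj)
    then have "k*u-1 = u*(u-k)" using u by (simp add: field_simps)
    then have "(u-k)^2 + (1 - k^2) = 0" by (simp add: algebra_simps power2_eq_square)
    moreover have "k^2 < 1" using k0 k1 by (simp add: power_less_one_iff abs_less_iff)
    ultimately show False by (smt (verit) zero_le_power2)
  qed
  show "RR \<in> {PP,QQ,RR}" by simp
  show "cross2 (Vp u) RR RR \<ge> 0" by (simp add: cross_self)
  show "cross2 (Vp u) RR PP \<ge> 0"
    by (rule sign_from[OF crossRP]) (use pos_sq1[of u] k0 g1 pos1[of u] in \<open>simp_all add: mult_nonpos_nonneg\<close>)
  show "cross2 (Vp u) RR QQ \<ge> 0"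
    by (rule sign_from[OF crossRQ]) (use pos_sq1[of u] k0 g2 pos1[of u] in \<open>simp_all add: mult_nonpos_nonneg\<close>)
qed

end


lemma L1: fixes k u :: real assumes k0: "0<k" and k9: "k<1/9" and u: "-1<u" "u<0"
  and g: "k*u^2-(1-k)*u-k^2 \<ge> 0" shows "u < -(k*k)"
proof (rule ccontr)
  assume "\<not> u < -(k*k)"
  then have h: "-(k*k) \<le> u" by simp
  have kk: "k*k < k" using k0 k9 by (simp add: mult_less_cancel_right1)
  have "u*u \<le> (k*k)*(k*k)"
  proof -
    have "(-u)*(-u) \<le> (k*k)*(k*k)" using h u by (intro mult_mono) auto
    then show ?thesis by simp
  qed
  then have a: "k*(u*u) \<le> k*((k*k)*(k*k))" using k0 by simp
  have b0: "(1-k)*(-u) \<le> (1-k)*(k*k)" using h k9 by (intro mult_left_mono) auto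
  then have b: "-(1-k)*u \<le> (1-k)*(k*k)" by (simp add: algebra_simps)
  have c: "k*((k*k)*(k*k)) < k*k*k"
  proof -
    have k1': "k*k < 1" using kk k9 by linarith
    have "(k*k)*(k*k) < 1*(k*k)" using k1' k0 by (intro mult_strict_right_mono) auto
    then have "(k*k)*(k*k) < k*k" by simp
    then show ?thesis using k0 by (simp add: mult.assoc)
  qed
  show False using g a b c by (simp add: power2_eq_square algebra_simps)
qed

lemma L2: fixes k u :: real assumes k0: "0<k" and u: "-1<u" "u<0" shows "k < -k/u"
proof -
  have "k*(-u) < k*1" using k0 u by (intro mult_strict_left_mono) auto
  then have "k < k/(-u)" using u by (subst less_divide_eq) simp
  also have "k/(-u) = -k/u" by simp
  finally show ?thesis .
qed


lemma L3: fixes k u :: real assumes k0: "0<k" and u: "u < -(k*k)" shows "-k/u < 1/k"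
proof -
  have "0 < k*k" using k0 by simp
  then have u0: "0 < -u" using u by linarith
  have "k < (-u)/k" using u k0 by (subst less_divide_eq) simp
  then have "k/(-u) < ((-u)/k)/(-u)" using u0 by (intro divide_strict_right_mono) auto
  also have "((-u)/k)/(-u) = 1/k" using u0 by simp
  finally show ?thesis by simp
qed

lemma L4: fixes k u :: real assumes k0: "0<k" and k9: "k<1/9" and u: "-1<u" "u<0"
  shows "k^2*u^2+(1-k)*u-k \<le> 0"
proof -
  have kk: "k*k < k" using k0 k9 by (simp add: mult_less_cancel_right1)
  have "u^2 < 1" using u by (simp add: abs_less_iff power2_less_1_iff)
  then have "k^2*u^2 \<le> k^2*1" using k0 by (intro mult_left_mono) auto
  moreover have "(1-k)*u \<le> 0" using u k9 by (simp add: mult_nonneg_nonpos)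
  moreover have "k^2 \<le> k" using kk by (simp add: power2_eq_square)
  ultimately show ?thesis by linarith
qed

lemma swapfrac: "(k*u-1)/(u-k) = (1-k*u)/(k-(u::real))"
  by (metis minus_diff_eq minus_divide_divide)

lemma L5: fixes k u :: real assumes k0: "0<k" and k9: "k<1/9" and u: "-1<u" "u<0"
  shows "k < (k*u-1)/(u-k)" "(k*u-1)/(u-k) < 1/k"
proof -
  have kk: "k*k < k" using k0 k9 by (simp add: mult_less_cancel_right1)
  have d: "0 < k - u" using u k0 by simp
  have "k*(k-u) < 1-k*u" using kk k9 by (simp add: algebra_simps)
  then have "k < (1-k*u)/(k-u)" using d by (subst less_divide_eq) simp
  then show "k < (k*u-1)/(u-k)" by (simp add: swapfrac)
  have "(1-k*u)*k < 1*(k-u)"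
  proof -
    have "k*k < 1" using kk k9 by linarith
    then have "u*1 < u*(k*k)" using u by (intro mult_strict_left_mono_neg) auto
    then have "u*(k*k) > u" by simp
    then show ?thesis by (simp add: algebra_simps)
  qed
  then have "(1-k*u)/(k-u) < 1/k" using d k0 by (simp add: frac_less_eq divide_less_eq less_divide_eq)
  then show "(k*u-1)/(u-k) < 1/k" by (simp add: swapfrac)
qed

lemma L6: fixes k u :: real assumes k0: "0<k" and u: "0<u" "k*u<1" shows "-1/(k*u) < -1"
proof -
  have p: "0 < k*u" using k0 u by simp
  have "1 < 1/(k*u)" using p u by (simp add: less_divide_eq)
  then show ?thesis by simp
qed

lemma L7: fixes k u :: real assumes k0: "0<k" and k9: "k<1/9" and u: "k<u" and g: "k^2*u^2+(1-k)*u-k < 0"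
  shows "k*u^2-(1-k)*u-k^2 \<le> 0" "u < 1"
proof -
  have "k^2*u^2 \<ge> 0" by simp
  then have a: "(1-k)*u < k" using g by linarith
  have "(1/2)*u \<le> (1-k)*u" using k9 u k0 by (intro mult_right_mono) auto
  then have u2: "u < 2*k" using a by linarith
  have "u^2 < (2*k)^2" using u2 u k0 by (intro power_strict_mono) auto
  then have "k*u^2 \<le> k*(4*k^2)" using k0 by (intro mult_left_mono) (auto simp: power_mult_distrib)
  moreover have "(1-k)*k < (1-k)*u" using u k9 by (intro mult_strict_left_mono) auto
  moreover have "k*(4*k^2) < k" 
  proof -
    have kk: "k*k < k" using k0 k9 by (simp add: mult_less_cancel_right1)
    then have "4*k^2 < 1" using k9 by (simp add: power2_eq_square)
    then show ?thesis using k0 by (simp add: mult_less_cancel_left1)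
  qed
  ultimately show "k*u^2-(1-k)*u-k^2 \<le> 0" by (simp add: algebra_simps power2_eq_square)
  show "u < 1" using u2 k9 by simp
qed

lemma L8: fixes k u :: real assumes k0: "0<k" and u: "k<u" "u<1" shows "(k*u-1)/(u-k) < -1"
proof -
  have d: "0 < u - k" using u by simp
  have "u*(1+k) < 1*(1+k)" using u k0 by (intro mult_strict_right_mono) auto
  then have "k*u - 1 < -1*(u-k)" by (simp add: algebra_simps)
  then show ?thesis using d by (simp add: divide_less_eq)
qed


lemma L9: fixes k u :: real assumes k0: "0<k" and k9: "k<1/9" and u: "u < -1"
  shows "k*u^2-(1-k)*u-k^2 \<ge> 0" "0 < -k/u" "-k/u < k"
proof -
  have kk: "k*k < k" using k0 k9 by (simp add: mult_less_cancel_right1)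
  have "k*u^2 \<ge> 0" using k0 by simp
  moreover have "(1-k)*1 < (1-k)*(-u)" using u k9 by (intro mult_strict_left_mono) auto
  ultimately show "k*u^2-(1-k)*u-k^2 \<ge> 0" using kk k9 by (simp add: power2_eq_square algebra_simps)
  show "0 < -k/u" using k0 u by (simp add: divide_pos_neg)
  have "k/(-u) < k/1" using k0 u by (intro divide_strict_left_mono) auto
  then show "-k/u < k" by simp
qed

lemma L11: fixes k u :: real assumes k0: "0<k" and k9: "k<1/9" and u: "0<u" "u<k"
  shows "k*u^2-(1-k)*u-k^2 \<le> 0" "k^2*u^2+(1-k)*u-k \<le> 0" "1/k < (k*u-1)/(u-k)"
proof -
  have kk: "k*k < k" using k0 k9 by (simp add: mult_less_cancel_right1)
  have k1: "k*k < 1" using kk k9 by linarith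
  have uu: "u*u < k*k" using u by (intro mult_strict_mono) auto
  have "k*(u*u) \<le> k*(k*k)" using uu k0 by simp
  moreover have "k*(k*k) < k*k" using k1 k0 kk by (simp add: mult_less_cancel_left1)
  moreover have "(1-k)*u \<ge> 0" using u k9 by simp
  ultimately show "k*u^2-(1-k)*u-k^2 \<le> 0" by (simp add: power2_eq_square algebra_simps)
  have "(k*k)*(u*u) \<le> (k*k)*(k*k)" using uu k0 by simp
  moreover have "(k*k)*(k*k) < k*k" using k1 k0 by (simp add: mult_less_cancel_left1)
  moreover have "(1-k)*u \<le> (1-k)*k" using u k9 by (intro mult_left_mono) auto
  ultimately show "k^2*u^2+(1-k)*u-k \<le> 0" by (simp add: power2_eq_square algebra_simps)
  have d: "0 < k - u" using u by simp
  have "u*(k*k) < u*1" using k1 u by (intro mult_strict_left_mono) auto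
  then have "1*(k-u) < (1-k*u)*k" by (simp add: algebra_simps)
  then have "1/k < (1-k*u)/(k-u)" using d k0 by (simp add: frac_less_eq divide_less_eq less_divide_eq)
  then show "1/k < (k*u-1)/(u-k)" by (simp add: swapfrac)
qed

lemma L14: fixes k u :: real assumes k0: "0<k" and k9: "k<1/9" and u: "1/k < u"
  shows "k^2*u^2+(1-k)*u-k \<ge> 0" "-1 < -1/(k*u)" "-1/(k*u) < 0" "0 < u" "k*u > 1"
proof -
  show ku: "k*u > 1" using u k0 by (simp add: divide_less_eq mult.commute)
  show u0: "0 < u" using u k0 by (smt (verit) divide_pos_pos)
  have "1*1 < (k*u)*(k*u)" using ku by (intro mult_strict_mono) auto
  moreover have "(1-k)*u \<ge> 0" using u0 k9 by simp
  ultimately show "k^2*u^2+(1-k)*u-k \<ge> 0" using k9 by (simp add: power2_eq_square algebra_simps)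
  have "1/(k*u) < 1" using ku by simp
  then show "-1 < -1/(k*u)" by simp
  show "-1/(k*u) < 0" using ku by simp
qed


lemma orbA1: fixes k u0 u1 u2 :: real assumes k0: "0<k" and k9: "k<1/9" and u: "-1<u0" "u0<0"
  and r1: "u1*u0 = -k" and r2: "k*u1*u2 = -1" and r3: "u0*(k^2+u2) = -(1+u2)"
  and gA: "k*u0^2-(1-k)*u0-k^2 \<ge> 0" and gB0: "k^2*u1^2+(1-k)*u1-k \<ge> 0"
  shows False
proof -
  have kk: "k*k < k" using k0 k9 by (simp add: mult_less_cancel_right1)
  have e2: "u2*k^2 = u0" using r1 r2 by algebra
  have H: "u0^2 + (1+k^4)*u0 + k^2 = 0"
  proof -
    have "u0*(k^2+u2)*k^2 = -(1+u2)*k^2" using r3 by simp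
    then show ?thesis using e2 by algebra
  qed
  have "(k^2*u1^2+(1-k)*u1-k)*u0^2 \<ge> 0" using gB0 by simp
  moreover have "(k^2*u1^2+(1-k)*u1-k)*u0^2 = k*(k^3 - (1-k)*u0 - u0^2)" using r1 by algebra
  ultimately have "k*(k^3 - (1-k)*u0 - u0^2) \<ge> 0" by simp
  then have B: "k^3 - (1-k)*u0 - u0^2 \<ge> 0" using k0 by (simp add: zero_le_mult_iff)
  have sq: "u0^2 = -(1+k^4)*u0 - k^2" using H by (simp add: algebra_simps eq_neg_iff_add_eq_0)
  have A2: "-u0 - k^5*u0 \<ge> k^2 + k^3"
  proof -
    have "k*u0^2 = -k*u0 - k^5*u0 - k^3" unfolding sq by (simp add: algebra_simps power_numeral_reduce)
    then show ?thesis using gA by (simp add: algebra_simps)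
  qed
  have k5: "k^5 \<le> k^3/2"
  proof -
    have "k^2 \<le> 1/2" using kk k9 by (simp add: power2_eq_square)
    then have "k^3*k^2 \<le> k^3*(1/2)" using k0 by (intro mult_left_mono) auto
    then show ?thesis by (simp add: power_add[symmetric])
  qed
  have "k^5*(-1) < k^5*u0" using u k0 by (intro mult_strict_left_mono) auto
  then have "k^5*u0 \<ge> -(k^5)" by simp
  then have ub: "u0 \<le> -(k^2) - k^3/2" using A2 k5 by linarith
  have B2: "k*(u0 + k^3*u0 + k + k^2) \<ge> 0"
  proof -
    have "k^3 - (1-k)*u0 - u0^2 = k*(u0 + k^3*u0 + k + k^2)" unfolding sq by (simp add: algebra_simps power_numeral_reduce)
    then show ?thesis using B by simp
  qed
  then have "u0 + k^3*u0 + k + k^2 \<ge> 0" using k0 by (simp add: zero_le_mult_iff)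
  moreover have "k^3*u0 < 0" using k0 u by (simp add: mult_pos_neg)
  ultimately have lb: "u0 \<ge> -k - k^2" by linarith
  define a where "a = -k - k^2"
  define b where "b = -(k^2) - k^3/2"
  define c where "c = 1 + k^4 + a + b"
  define hb where "hb = b^2 + (1+k^4)*b + k^2"
  have id: "(u0-a)*(u0-b) = (u0^2 + (1+k^4)*u0 + k^2) + c*(b-u0) - hb"
    unfolding c_def hb_def by algebra
  have p1: "(u0-a)*(u0-b) \<le> 0" using lb ub unfolding a_def b_def by (intro mult_nonneg_nonpos) auto
  have cpos: "c > 0"
  proof -
    have "k^2 < k" using kk by (simp add: power2_eq_square)
    moreover have "k^3 < k"
    proof -
      have "k*k < 1" using kk k9 by linarith
      then have "k*(k*k) < k*1" using k0 by (intro mult_strict_left_mono) auto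
      then show ?thesis by (simp add: power3_eq_cube)
    qed
    moreover have "k^4 \<ge> 0" by simp
    ultimately show ?thesis unfolding c_def a_def b_def using k9 by linarith
  qed
  have p2: "c*(b-u0) \<ge> 0" using cpos ub unfolding b_def by simp
  have hbneg: "hb < 0"
  proof -
    have e: "hb = k^4 + k^5 - k^3/2 - 3/4*k^6 - k^7/2" unfolding hb_def b_def by (simp add: algebra_simps power2_eq_square power_numeral_reduce)
    have "k^4 \<le> k^3/9"
    proof -
      have "k^3*k \<le> k^3*(1/9)" using k0 k9 by (intro mult_left_mono) auto
      then show ?thesis by (simp add: power_numeral_reduce)
    qed
    moreover have "k^5 \<le> k^3/9"
    proof -
      have "k^2 \<le> 1/9" using kk k9 by (simp add: power2_eq_square)
      then have "k^3*k^2 \<le> k^3*(1/9)" using k0 by (intro mult_left_mono) auto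
      then show ?thesis by (simp add: power_add[symmetric])
    qed
    moreover have "k^6 \<ge> 0" "k^7 \<ge> 0" "k^3 > 0" using k0 by auto
    ultimately show ?thesis unfolding e by linarith
  qed
  show False using id p1 p2 hbneg H by linarith
qed


lemma orbA2: fixes k u0 u1 u2 :: real assumes k0: "0<k" and k9: "k<1/9" and u: "-1<u0" "u0<0"
  and r1: "u1*u0 = -k" and r2: "u2*(u1-k) = k*u1-1" and r3: "u0*(k^2+u2) = -(1+u2)"
  and u1k: "k < u1" and g: "k^2*u1^2+(1-k)*u1-k < 0"
  shows False
proof -
  have kk: "k*k < k" using k0 k9 by (simp add: mult_less_cancel_right1)
  have E: "k^2 + u0 + k + k^3*u0 = 0" using r1 r2 r3 by algebra
  have "k^2*u1^2 \<ge> 0" by simp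
  then have a: "(1-k)*u1 < k" using g by linarith
  have "(1/2)*u1 \<le> (1-k)*u1" using k9 u1k k0 by (intro mult_right_mono) auto
  then have u2k: "u1 < 2*k" using a by linarith
  have "u0*(2*k) < u0*u1" using u2k u by (intro mult_strict_left_mono_neg) auto
  then have "u0*(2*k) < -k" using r1 by (simp add: mult.commute)
  then have "k*(2*u0+1) < 0" by (simp add: algebra_simps)
  then have lo: "u0 < -1/2" using k0 by (simp add: mult_less_0_iff)
  have "k^3*u0 < 0" using k0 u by (simp add: mult_pos_neg)
  then have "u0 > -k - k^2" using E by linarith
  then show False using lo kk k9 by (simp add: power2_eq_square)
qed

lemma orbB1: fixes k u0 u1 u2 :: real assumes k0: "0<k" and k9: "k<1/9" and u: "-1<u0" "u0<0"
  and r1: "u1*(u0-k) = k*u0-1" and r2: "k*u1*u2 = -1" and r3: "u0*(k^2+u2) = -(1+u2)"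
  and g: "k*u0^2-(1-k)*u0-k^2 < 0"
  shows False
proof -
  have kk: "k*k < k" using k0 k9 by (simp add: mult_less_cancel_right1)
  have E: "u0*(1-k^2)*((1+k^2)*u0 + (1-k)) = 0" using r1 r2 r3 by algebra
  have "1-k^2 \<noteq> 0" using kk k9 by (simp add: power2_eq_square)
  moreover have "u0 = 0 \<or> 1-k^2 = 0 \<or> (1+k^2)*u0 + (1-k) = 0" using E by (simp only: mult_eq_0_iff disj_assoc)
  ultimately have "(1+k^2)*u0 + (1-k) = 0" using u by auto
  then have E2: "u0 + k^2*u0 = -1 + k" by (simp add: algebra_simps)
  have "k^2*u0 > k^2*(-1)" using u k0 by (intro mult_strict_left_mono) auto
  then have lo: "u0 < -1 + k + k^2" using E2 by linarith
  have "k*u0^2 \<ge> 0" using k0 by simp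
  moreover have "k*u0 > k*(-1)" using u k0 by (intro mult_strict_left_mono) auto
  ultimately have "k*u0^2-(1-k)*u0-k^2 > 0" using lo kk k9 by (simp add: algebra_simps power2_eq_square)
  then show False using g by simp
qed

lemma orbB2: fixes k u0 u1 u2 :: real assumes k0: "0<k" and k1: "k<1"
  and r1: "u1*(u0-k) = k*u0-1" and r2: "u2*(u1-k) = k*u1-1"
  shows "u2 = u0"
proof -
  have E: "(u2-u0)*(k^2-1) = 0" using r1 r2 by algebra
  have "k^2 - 1 \<noteq> 0" using k0 k1 by (smt (verit) power_less_one_iff abs_of_pos power2_eq_1_iff)
  then show ?thesis using E by simp
qed


locale tri9 = tri +
  assumes k9: "k < 1/9"
begin

lemma kk: "k*k < k" using k0 k9 by (simp add: mult_less_cancel_right1)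

abbreviation "F \<equiv> psi TT"

lemma tr1: assumes "-1 < u" "u < 0" shows "\<exists>u'. F (Vp u) = Vp u' \<and> k < u' \<and> u' < 1/k"
proof (cases "k*u^2-(1-k)*u-k^2 \<ge> 0")
  case True
  have "u < -(k*k)" using L1[OF k0 k9 assms True] .
  then have "-k/u < 1/k" using L3 k0 by blast
  then show ?thesis using stepP[OF assms(2) True] L2[OF k0 assms] by blast
next
  case False
  have un: "u \<noteq> k" using assms k0 by simp
  show ?thesis using stepR[OF un _ L4[OF k0 k9 assms]] False L5[OF k0 k9 assms] by auto
qed

lemma tr3: assumes "k < u" "u < 1/k" shows "\<exists>u'. F (Vp u) = Vp u' \<and> u' < -1"
proof (cases "k^2*u^2+(1-k)*u-k \<ge> 0")
  case True
  have u0: "0 < u" using assms k0 by simp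
  have "k*u < 1" using assms k0 by (simp add: less_divide_eq mult.commute)
  then show ?thesis using stepQ[OF u0 True] L6[OF k0 u0] by blast
next
  case False
  then have g: "k^2*u^2+(1-k)*u-k < 0" by simp
  have un: "u \<noteq> k" using assms by simp
  show ?thesis using stepR[OF un L7(1)[OF k0 k9 assms(1) g]] g L8[OF k0 assms(1) L7(2)[OF k0 k9 assms(1) g]] by auto
qed

lemma tr5: assumes "u < -1" shows "\<exists>u'. F (Vp u) = Vp u' \<and> 0 < u' \<and> u' < k"
  using stepP[OF _ L9(1)[OF k0 k9 assms]] L9(2,3)[OF k0 k9 assms] assms by auto

lemma tr2: assumes "0 < u" "u < k" shows "\<exists>u'. F (Vp u) = Vp u' \<and> 1/k < u'"
proof -
  have un: "u \<noteq> k" using assms by simp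
  show ?thesis using stepR[OF un L11(1,2)[OF k0 k9 assms]] L11(3)[OF k0 k9 assms] by auto
qed

lemma tr4: assumes "1/k < u" shows "\<exists>u'. F (Vp u) = Vp u' \<and> -1 < u' \<and> u' < 0"
  using stepQ[OF L14(4)[OF k0 k9 assms] L14(1)[OF k0 k9 assms]] L14(2,3)[OF k0 k9 assms] by auto


lemma F3: "(F^^3) x = F (F (F x))" by (simp add: numeral_3_eq_3)
lemma F5: "(F^^5) x = (F^^3) (F (F x))"
proof -
  have "(F^^5) x = (F^^(3+2)) x" by simp
  also have "\<dots> = (F^^3) ((F^^2) x)" by (simp only: funpow_add comp_apply)
  finally show ?thesis by (simp add: numeral_2_eq_2)
qed

lemma tail: assumes u2: "u2 < -1" shows "\<exists>u5. (F^^3) (Vp u2) = Vp u5 \<and> u5*(k^2+u2) = -(1+u2)"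
proof -
  define u3 where "u3 = -k/u2"
  have s3: "F (Vp u2) = Vp u3" unfolding u3_def using stepP[OF _ L9(1)[OF k0 k9 u2]] u2 by simp
  have u3: "0 < u3" "u3 < k" unfolding u3_def using L9(2,3)[OF k0 k9 u2] by auto
  define u4 where "u4 = (k*u3-1)/(u3-k)"
  have un: "u3 \<noteq> k" using u3 by simp
  have s4: "F (Vp u3) = Vp u4" unfolding u4_def using stepR[OF un L11(1,2)[OF k0 k9 u3]] .
  have u4: "1/k < u4" unfolding u4_def using L11(3)[OF k0 k9 u3] .
  define u5 where "u5 = -1/(k*u4)"
  have s5: "F (Vp u4) = Vp u5" unfolding u5_def using stepQ[OF L14(4)[OF k0 k9 u4] L14(1)[OF k0 k9 u4]] .
  have r1: "u3*u2 = -k" unfolding u3_def using u2 by simp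
  have r2: "u4*(u3-k) = k*u3-1" unfolding u4_def using un by simp
  have ku4: "k*u4 \<noteq> 0" using L14(5)[OF k0 k9 u4] by linarith
  have r3: "k*u4*u5 = -1" unfolding u5_def using ku4 by simp
  have "u5*(k^2+u2) = -(1+u2)" using r1 r2 r3 by algebra
  then show ?thesis using s3 s4 s5 F3 by auto
qed

lemma orbit: assumes u: "-1 < u0" "u0 < 0" shows "(F^^5) (Vp u0) \<noteq> Vp u0"
proof
  assume fix5: "(F^^5) (Vp u0) = Vp u0"
  have u0n: "u0 \<noteq> 0" using u by simp
  show False
  proof (cases "k*u0^2-(1-k)*u0-k^2 \<ge> 0")
    case gA: True
    define u1 where "u1 = -k/u0"
    have s1: "F (Vp u0) = Vp u1" unfolding u1_def using stepP[OF u(2) gA] .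
    have "u0 < -(k*k)" using L1[OF k0 k9 u gA] .
    then have u1: "k < u1" "u1 < 1/k" unfolding u1_def using L3 k0 L2[OF k0 u] by auto
    have r1: "u1*u0 = -k" unfolding u1_def using u0n by simp
    show False
    proof (cases "k^2*u1^2+(1-k)*u1-k \<ge> 0")
      case gB: True
      have u1p: "0 < u1" using u1 k0 by simp
      define u2 where "u2 = -1/(k*u1)"
      have s2: "F (Vp u1) = Vp u2" unfolding u2_def using stepQ[OF u1p gB] .
      have "k*u1 < 1" using u1 k0 by (simp add: less_divide_eq mult.commute)
      then have u2: "u2 < -1" unfolding u2_def using L6[OF k0 u1p] by simp
      have r2: "k*u1*u2 = -1" unfolding u2_def using u1p k0 by simp
      obtain u5 where t: "(F^^3) (Vp u2) = Vp u5" "u5*(k^2+u2) = -(1+u2)" using tail[OF u2] by blast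
      have "Vp u5 = Vp u0" using fix5 F5 s1 s2 t(1) by simp
      then have "u5 = u0" by (rule Vp_inj)
      then show False using orbA1[OF k0 k9 u r1 r2 _ gA gB] t(2) by simp
    next
      case False
      then have g: "k^2*u1^2+(1-k)*u1-k < 0" by simp
      have un: "u1 \<noteq> k" using u1 by simp
      define u2 where "u2 = (k*u1-1)/(u1-k)"
      have s2: "F (Vp u1) = Vp u2" unfolding u2_def using stepR[OF un L7(1)[OF k0 k9 u1(1) g]] g by simp
      have u2: "u2 < -1" unfolding u2_def using L8[OF k0 u1(1) L7(2)[OF k0 k9 u1(1) g]] .
      have r2: "u2*(u1-k) = k*u1-1" unfolding u2_def using un by simp
      obtain u5 where t: "(F^^3) (Vp u2) = Vp u5" "u5*(k^2+u2) = -(1+u2)" using tail[OF u2] by blast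
      have "Vp u5 = Vp u0" using fix5 F5 s1 s2 t(1) by simp
      then have "u5 = u0" by (rule Vp_inj)
      then show False using orbA2[OF k0 k9 u r1 r2 _ u1(1) g] t(2) by simp
    qed
  next
    case False
    then have gA: "k*u0^2-(1-k)*u0-k^2 < 0" by simp
    have un0: "u0 \<noteq> k" using u k0 by simp
    define u1 where "u1 = (k*u0-1)/(u0-k)"
    have s1: "F (Vp u0) = Vp u1" unfolding u1_def using stepR[OF un0 _ L4[OF k0 k9 u]] gA by simp
    have u1: "k < u1" "u1 < 1/k" unfolding u1_def using L5[OF k0 k9 u] by auto
    have r1: "u1*(u0-k) = k*u0-1" unfolding u1_def using un0 by simp
    show False
    proof (cases "k^2*u1^2+(1-k)*u1-k \<ge> 0")
      case gB: True
      have u1p: "0 < u1" using u1 k0 by simp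
      define u2 where "u2 = -1/(k*u1)"
      have s2: "F (Vp u1) = Vp u2" unfolding u2_def using stepQ[OF u1p gB] .
      have "k*u1 < 1" using u1 k0 by (simp add: less_divide_eq mult.commute)
      then have u2: "u2 < -1" unfolding u2_def using L6[OF k0 u1p] by simp
      have r2: "k*u1*u2 = -1" unfolding u2_def using u1p k0 by simp
      obtain u5 where t: "(F^^3) (Vp u2) = Vp u5" "u5*(k^2+u2) = -(1+u2)" using tail[OF u2] by blast
      have "Vp u5 = Vp u0" using fix5 F5 s1 s2 t(1) by simp
      then have "u5 = u0" by (rule Vp_inj)
      then show False using orbB1[OF k0 k9 u r1 r2 _ gA] t(2) by simp
    next
      case False
      then have g: "k^2*u1^2+(1-k)*u1-k < 0" by simp
      have un: "u1 \<noteq> k" using u1 by simp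
      define u2 where "u2 = (k*u1-1)/(u1-k)"
      have u2: "u2 < -1" unfolding u2_def using L8[OF k0 u1(1) L7(2)[OF k0 k9 u1(1) g]] .
      have r2: "u2*(u1-k) = k*u1-1" unfolding u2_def using un by simp
      have "u2 = u0" using orbB2[OF k0 k1 r1 r2] .
      then show False using u2 u by simp
    qed
  qed
qed


lemma Fcomm: "(F^^5) ((F^^j) x) = (F^^j) ((F^^5) x)"
proof -
  have "(F^^5) ((F^^j) x) = (F^^(5+j)) x" by (simp add: funpow_add)
  also have "\<dots> = (F^^(j+5)) x" by (simp add: add.commute)
  also have "\<dots> = (F^^j) ((F^^5) x)" by (simp add: funpow_add)
  finally show ?thesis .
qed

lemma bad: assumes "(F^^j) (Vp u) = Vp w" "-1 < w" "w < 0" shows "(F^^5) (Vp u) \<noteq> Vp u"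
proof
  assume "(F^^5) (Vp u) = Vp u"
  then have "(F^^5) (Vp w) = Vp w" using Fcomm[of j "Vp u"] assms(1) by simp
  then show False using orbit[OF assms(2,3)] by simp
qed

lemma notfix: assumes "u \<noteq> -1" "u \<noteq> 0" "u \<noteq> k" "u \<noteq> 1/k"
  shows "(F^^5) (Vp u) \<noteq> Vp u"
proof -
  have F2: "(F^^2) x = F (F x)" for x by (simp add: numeral_2_eq_2)
  have F4: "(F^^4) x = F (F (F (F x)))" for x by (simp add: numeral_eq_Suc)
  have "k*k < 1" using kk k1 by linarith
  then have k1k: "k < 1/k" using k0 by (simp add: less_divide_eq)
  consider "u < -1" | "-1 < u \<and> u < 0" | "0 < u \<and> u < k" | "k < u \<and> u < 1/k" | "1/k < u"
    using assms by (meson linorder_neqE_linordered_idom)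
  then show ?thesis
  proof cases
    case 1
    obtain a where a: "F (Vp u) = Vp a" "0 < a" "a < k" using tr5[OF 1] by blast
    obtain b where b: "F (Vp a) = Vp b" "1/k < b" using tr2[OF a(2,3)] by blast
    obtain c where c: "F (Vp b) = Vp c" "-1 < c" "c < 0" using tr4[OF b(2)] by blast
    show ?thesis by (rule bad[of 3 u c]) (use a b c F3 in auto)
  next
    case 2
    then show ?thesis using bad[of 0 u u] by simp
  next
    case 3
    obtain b where b: "F (Vp u) = Vp b" "1/k < b" using tr2 3 by blast
    obtain c where c: "F (Vp b) = Vp c" "-1 < c" "c < 0" using tr4[OF b(2)] by blast
    show ?thesis by (rule bad[of 2 u c]) (use b c F2 in auto)
  next
    case 4
    obtain z where z: "F (Vp u) = Vp z" "z < -1" using tr3 4 by blast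
    obtain a where a: "F (Vp z) = Vp a" "0 < a" "a < k" using tr5[OF z(2)] by blast
    obtain b where b: "F (Vp a) = Vp b" "1/k < b" using tr2[OF a(2,3)] by blast
    obtain c where c: "F (Vp b) = Vp c" "-1 < c" "c < 0" using tr4[OF b(2)] by blast
    show ?thesis by (rule bad[of 4 u c]) (use z a b c F4 in auto)
  next
    case 5
    obtain c where c: "F (Vp u) = Vp c" "-1 < c" "c < 0" using tr4[OF 5] by blast
    show ?thesis by (rule bad[of 1 u c]) (use c in auto)
  qed
qed

end

lemma Vp_surj: assumes v: "cmod v = 1" and y: "1 + Im v \<noteq> 0"
  shows "Vp (-Re v/(1+Im v)) = v"
proof -
  define x where "x = Re v"
  define y where "y = Im v"
  have xy: "x^2+y^2 = 1" using v norm1_iff unfolding x_def y_def by blast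
  have yn: "1+y \<noteq> 0" using assms unfolding y_def by simp
  have "Vp (-x/(1+y)) = Vh ((1+y)*(-x/(1+y))) ((1+y)*1)"
    unfolding Vp_Vh using yn by (intro Vh_scale[symmetric]) auto
  also have "\<dots> = Vh (-x) (1+y)" using yn by simp
  also have "\<dots> = Complex x y"
  proof -
    have d: "(-x)^2+(1+y)^2 = 2*(1+y)" using xy by (simp add: algebra_simps power2_eq_square)
    have dn: "2*(1+y) \<noteq> 0" using yn by simp
    have "-2*(-x)*(1+y)/((-x)^2+(1+y)^2) = x" unfolding d using dn by (simp add: field_simps)
    moreover have "((1+y)^2-(-x)^2)/((-x)^2+(1+y)^2) = y" unfolding d using dn xy
      by (simp add: divide_eq_eq) (simp add: algebra_simps power2_eq_square)
    ultimately show ?thesis unfolding Vh_def by simp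
  qed
  finally show ?thesis unfolding x_def y_def by simp
qed


lemma Vh_A: assumes "0 < t" "t < (1::real)"
  shows "Vh (1-t) (1+t) = Complex ((t^2 - 1) / (t^2 + 1)) (2 * t / (t^2 + 1))"
    and "Vh (1+t) (1-t) = Complex ((t^2 - 1) / (t^2 + 1)) (- (2 * t / (t^2 + 1)))"
proof -
  have d1: "(1-t)^2+(1+t)^2 = 2*(t^2+1)" by (simp add: algebra_simps power2_eq_square)
  have d2: "(1+t)^2+(1-t)^2 = 2*(t^2+1)" by (simp add: algebra_simps power2_eq_square)
  have n: "t^2+1 \<noteq> 0" by (simp add: add.commute)
  have n2: "2*(t^2+1) \<noteq> 0" using n by simp
  have e1: "-2*(1-t)*(1+t)/(2*(t^2+1)) = (t^2 - 1) / (t^2 + 1)"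
    using n n2 by (simp add: frac_eq_eq) (simp add: algebra_simps power2_eq_square)
  have e2: "-2*(1+t)*(1-t)/(2*(t^2+1)) = (t^2 - 1) / (t^2 + 1)"
    using n n2 by (simp add: frac_eq_eq) (simp add: algebra_simps power2_eq_square)
  have f3: "(1+t)^2-(1-t)^2 = 2*(2*t)" by (simp add: algebra_simps power2_eq_square)
  have e3: "((1+t)^2-(1-t)^2)/(2*(t^2+1)) = 2 * t / (t^2 + 1)"
    unfolding f3 by (rule mult_divide_mult_cancel_left) simp
  have f4: "(1-t)^2-(1+t)^2 = 2*(-(2*t))" by (simp add: algebra_simps power2_eq_square)
  have e4: "((1-t)^2-(1+t)^2)/(2*(t^2+1)) = - (2 * t / (t^2 + 1))"
    unfolding f4 by (subst mult_divide_mult_cancel_left) simp_all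
  show "Vh (1-t) (1+t) = Complex ((t^2 - 1) / (t^2 + 1)) (2 * t / (t^2 + 1))"
    unfolding Vh_def d1 e1 e3 by simp
  show "Vh (1+t) (1-t) = Complex ((t^2 - 1) / (t^2 + 1)) (- (2 * t / (t^2 + 1)))"
    unfolding Vh_def d2 e2 e4 by simp
qed

theorem lemma6p13:
  fixes t :: real and v :: complex
  assumes "0.8 < t" and "t < 1"
    and "cmod v = 1"
    and "(psi (triangle (Complex 0 t) (Complex 0 (-t)) (Complex ((t - 1) / (t + 1)) 0)) ^^ 5) v = v"
  shows "v \<in> {Complex 1 0,
               Complex ((t^2 - 1) / (t^2 + 1)) (2 * t / (t^2 + 1)),
               Complex 0 (-1),
               Complex 0 1,
               Complex ((t^2 - 1) / (t^2 + 1)) (- (2 * t / (t^2 + 1)))}"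
proof -
  define k where "k = (1-t)/(1+t)"
  have tp: "0 < 1+t" "0 < t" "0 < 1-t" using assms(1,2) by auto
  have k0: "0 < k" unfolding k_def using tp by simp
  have k9: "k < 1/9" unfolding k_def using tp assms(1) by (simp add: divide_less_eq)
  have k1: "k < 1" using k9 by simp
  have ttk: "t*(1+k) = 1-k" unfolding k_def using tp by (simp add: field_simps)
  have "tri9 k t" unfolding tri9_def tri9_axioms_def tri_def using k0 k1 ttk k9 by auto
  then interpret T: tri9 k t .
  have Re: "(t-1)/(t+1) = -k" unfolding k_def using tp by (simp add: field_simps)
  have TTe: "triangle (Complex 0 t) (Complex 0 (-t)) (Complex ((t - 1) / (t + 1)) 0) = T.TT"
    unfolding T.TT_def T.PP_def T.QQ_def T.RR_def Re ..
  have fix5: "(T.F ^^ 5) v = v" using assms(4) unfolding TTe .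
  show ?thesis
  proof (cases "1 + Im v = 0")
    case True
    have "(Re v)^2 + (Im v)^2 = 1" using assms(3) norm1_iff by blast
    moreover have "Im v = -1" using True by simp
    ultimately have "Re v = 0" by simp
    then have "v = Complex 0 (-1)" using True by (simp add: complex_eq_iff)
    then show ?thesis by simp
  next
    case False
    define u where "u = -Re v/(1+Im v)"
    have vu: "v = Vp u" unfolding u_def using Vp_surj[OF assms(3) False] by simp
    have "(T.F ^^ 5) (Vp u) = Vp u" using fix5 vu by simp
    then have "u = -1 \<or> u = 0 \<or> u = k \<or> u = 1/k" using T.notfix by blast
    moreover have "Vp (-1) = Complex 1 0" unfolding Vp_def by simp
    moreover have "Vp 0 = Complex 0 1" unfolding Vp_def by simp
    moreover have "Vp k = Complex ((t^2 - 1) / (t^2 + 1)) (2 * t / (t^2 + 1))"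
    proof -
      have "Vp k = Vh ((1+t)*k) ((1+t)*1)" unfolding Vp_Vh using tp by (intro Vh_scale[symmetric]) auto
      also have "(1+t)*k = 1-t" unfolding k_def using tp by simp
      finally show ?thesis using Vh_A(1)[OF tp(2) assms(2)] by simp
    qed
    moreover have "Vp (1/k) = Complex ((t^2 - 1) / (t^2 + 1)) (- (2 * t / (t^2 + 1)))"
    proof -
      have "Vp (1/k) = Vh ((1-t)*(1/k)) ((1-t)*1)" unfolding Vp_Vh using tp by (intro Vh_scale[symmetric]) auto
      also have "(1-t)*(1/k) = 1+t" unfolding k_def using tp by simp
      finally show ?thesis using Vh_A(2)[OF tp(2) assms(2)] by simp
    qed
    ultimately show ?thesis using vu by auto
  qed
qed

end
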